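(* Assume $\sum_{j=1}^\infty\beta_j^2<\infty$ and $|\rho|<1$. Then the limits $\kappa_i=\lim_{p\to\infty}\kappa_{i,p}$ satisfy (i) $\kappa_1=\beta(1)+2b_1(\rho)$; (ii) $\kappa_2=\beta(1)\frac{1+\rho^2}{1-\rho^2}-\beta(\rho^2)\frac{1}{1-\rho^2}+2\Big(b_1^{(1)}(\rho)+b_1(\rho)\frac{1+\rho^2}{1-\rho^2}-b_2(\rho)\frac{1}{1-\rho^2}\Big)$; (iii) $\kappa_3=\frac{1}{(1-\rho^2)^2}\big((1+4\rho^2+\rho^4)(\beta(1)+2b_1(\rho))-(1+3\rho^2)(\beta(\rho^2)+2b_2(\rho))\big)+\frac{1}{1-\rho^2}\big(3b_1^{(1)}(\rho)(1+\rho^2)-2(b_2^{(1)}(\rho)+\beta^{(1)}(\rho^2))\big)+b^{(2)}(\rho)$.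
   Context: $\kappa_{1,p}=\sum_{k,l=1}^p\beta_k\beta_l\rho^{|k-l|}$, $\kappa_{2,p}=\sum_{k=1}^p\big(\sum_{l=1}^p\beta_l\rho^{|k-l|}\big)^2$, $\kappa_{3,p}=\sum_{k,l,j,j'=1}^p\beta_j\beta_{j'}\rho^{|k-j|}\rho^{|l-j'|}\rho^{|k-l|}$. For $|x|\le1$: $\beta(x)=\sum_{j\ge1}\beta_j^2x^j$, $\beta^{(1)}(x)=\sum_{j\ge1}j\beta_j^2x^j$, $b_1(x)=\sum_{j'\ge2}\sum_{j=1}^{j'-1}\beta_j\beta_{j'}x^{j'-j}$, $b_2(x)=\sum_{j'\ge2}\sum_{j=1}^{j'-1}\beta_j\beta_{j'}x^{j'+j}$, $b_1^{(1)}(x)=\sum_{j'\ge2}\sum_{j=1}^{j'-1}\beta_j\beta_{j'}x^{j'-j}(j'-j)$, $b_2^{(1)}(x)=\sum_{j'\ge2}\sum_{j=1}^{j'-1}\beta_j\beta_{j'}x^{j'+j}(j'+j)$, $b^{(2)}(x)=\sum_{j'\ge2}\sum_{j=1}^{j'-1}\beta_j\beta_{j'}x^{j'-j}(j'-j)^2$. *)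

theory Defs
  imports "HOL-Analysis.Analysis"
begin

text \<open>Coefficients are a sequence beta :: nat => real; only indices j >= 1 are used.
  ad k l is the absolute difference |k - l| of natural numbers.\<close>

definition ad :: "nat \<Rightarrow> nat \<Rightarrow> nat" where
  "ad k l = (if k \<le> l then l - k else k - l)"

definition kappa1 :: "(nat \<Rightarrow> real) \<Rightarrow> real \<Rightarrow> nat \<Rightarrow> real" where
  "kappa1 b r p = (\<Sum>k=1..p. \<Sum>l=1..p. b k * b l * r ^ ad k l)"

definition kappa2 :: "(nat \<Rightarrow> real) \<Rightarrow> real \<Rightarrow> nat \<Rightarrow> real" where
  "kappa2 b r p = (\<Sum>k=1..p. (\<Sum>l=1..p. b l * r ^ ad k l)^2)"

definition kappa3 :: "(nat \<Rightarrow> real) \<Rightarrow> real \<Rightarrow> nat \<Rightarrow> real" where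
  "kappa3 b r p = (\<Sum>k=1..p. \<Sum>l=1..p. \<Sum>j=1..p. \<Sum>j'=1..p.
      b j * b j' * r ^ ad k j * r ^ ad l j' * r ^ ad k l)"

definition betaf :: "(nat \<Rightarrow> real) \<Rightarrow> real \<Rightarrow> real" where
  "betaf b x = (\<Sum>j. b (Suc j)^2 * x ^ Suc j)"

definition betaf1 :: "(nat \<Rightarrow> real) \<Rightarrow> real \<Rightarrow> real" where
  "betaf1 b x = (\<Sum>j. real (Suc j) * b (Suc j)^2 * x ^ Suc j)"

text \<open>Double series sum_{j'>=2} sum_{j=1}^{j'-1}; for j' < 2 the inner sum is empty.\<close>
definition b1 :: "(nat \<Rightarrow> real) \<Rightarrow> real \<Rightarrow> real" where
  "b1 b x = (\<Sum>j'. \<Sum>j\<in>{1..<j'}. b j * b j' * x ^ (j' - j))"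

definition b2 :: "(nat \<Rightarrow> real) \<Rightarrow> real \<Rightarrow> real" where
  "b2 b x = (\<Sum>j'. \<Sum>j\<in>{1..<j'}. b j * b j' * x ^ (j' + j))"

definition b1d :: "(nat \<Rightarrow> real) \<Rightarrow> real \<Rightarrow> real" where
  "b1d b x = (\<Sum>j'. \<Sum>j\<in>{1..<j'}. b j * b j' * x ^ (j' - j) * real (j' - j))"

definition b2d :: "(nat \<Rightarrow> real) \<Rightarrow> real \<Rightarrow> real" where
  "b2d b x = (\<Sum>j'. \<Sum>j\<in>{1..<j'}. b j * b j' * x ^ (j' + j) * real (j' + j))"

definition bdd2 :: "(nat \<Rightarrow> real) \<Rightarrow> real \<Rightarrow> real" where
  "bdd2 b x = (\<Sum>j'. \<Sum>j\<in>{1..<j'}. b j * b j' * x ^ (j' - j) * real (j' - j)^2)"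

end

theory Submission
  imports Defs
begin


lemma ad_sym: "ad k l = ad l k" by (simp add: ad_def)
lemma ad_Suc[simp]: "ad (Suc k) (Suc j) = ad k j" by (simp add: ad_def)
lemma ad_0r[simp]: "ad k 0 = k" and ad_0l[simp]: "ad 0 j = j" by (auto simp: ad_def)

lemma sums_shift_kernel:
  fixes h :: "nat \<Rightarrow> nat \<Rightarrow> real"
  assumes "(\<lambda>k. h (ad (Suc k) j) (ad (Suc k) j')) sums V"
  shows "(\<lambda>k. h (ad (Suc k) (Suc j)) (ad (Suc k) (Suc j'))) sums (V + h j j')"
proof -
  let ?g = "\<lambda>k. h (ad k j) (ad k j')"
  have "?g sums (V + ?g 0)" using sums_Suc_iff[of ?g V] assms by simp
  moreover have "(\<lambda>k. h (ad (Suc k) (Suc j)) (ad (Suc k) (Suc j'))) = ?g" by simp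
  ultimately show ?thesis by simp
qed

lemma sums_shift_iter:
  fixes h :: "nat \<Rightarrow> nat \<Rightarrow> real"
  assumes "(\<lambda>k. h (ad (Suc k) 0) (ad (Suc k) d)) sums V"
  shows "(\<lambda>k. h (ad (Suc k) i) (ad (Suc k) (i+d))) sums (V + (\<Sum>t<i. h t (t+d)))"
proof (induction i)
  case 0 thus ?case using assms by simp
next
  case (Suc i)
  from sums_shift_kernel[where h=h and j=i and j'="i+d", OF Suc.IH] show ?case by (simp add: add.assoc)
qed

lemma sum_count_up: "(\<Sum>i<d. real i) = real d * (real d - 1) / 2"
  by (induction d) (auto simp: field_simps)

lemma sum_count_down: "(\<Sum>i<d. real (d - Suc i)) = real d * (real d - 1) / 2"
  using sum.nat_diff_reindex[where g=real and n=d] sum_count_up by simp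

lemma sum_tx: "(\<Sum>t<i. real t * (x::real)^t) * (1-x)^2 = x - real i * x^i + (real i - 1) * x^(Suc i)"
  by (induction i) (auto simp: field_simps power2_eq_square)

definition cc :: "real \<Rightarrow> real" where "cc r = (1 + r^2) / (1 - r^2)"

definition K2full :: "real \<Rightarrow> nat \<Rightarrow> nat \<Rightarrow> real" where
  "K2full r j j' = r^(ad j j') * (real (ad j j') + cc r) - r^(j+j') / (1 - r^2)"

lemma K2_base:
  assumes "\<bar>r\<bar> < 1"
  shows "(\<lambda>k. r^(ad (Suc k) 0) * r^(ad (Suc k) d)) sums (real d * r^d + r^(d+2) / (1 - r^2))"
proof -
  have r2: "norm (r^2) < 1" using assms by (simp add: abs_square_less_1)
  define f where "f = (\<lambda>k. r^(ad (Suc k) 0) * r^(ad (Suc k) d))"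
  have "(\<lambda>i. r^(d+2) * (r^2)^i) sums (r^(d+2) * (1 / (1 - r^2)))"
    by (rule sums_mult[OF geometric_sums[OF r2]])
  moreover have "(\<lambda>i. r^(ad (Suc (i+d)) 0) * r^(ad (Suc (i+d)) d)) = (\<lambda>i. r^(d+2) * (r^2)^i)"
  proof (rule ext)
    fix i
    have "r^(ad (Suc (i+d)) 0) * r^(ad (Suc (i+d)) d) = r^(Suc(i+d) + Suc i)"
      by (simp add: ad_def power_add)
    also have "Suc(i+d) + Suc i = (d+2) + 2*i" by simp
    finally show "r^(ad (Suc (i+d)) 0) * r^(ad (Suc (i+d)) d) = r^(d+2) * (r^2)^i"
      by (simp only: power_add power_mult)
  qed
  ultimately have "(\<lambda>i. f (i+d)) sums (r^(d+2) / (1 - r^2))"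
    unfolding f_def by simp
  hence "f sums (r^(d+2) / (1 - r^2) + (\<Sum>i<d. f i))"
    by (simp only: sums_iff_shift)
  hence "(\<lambda>k. r^(ad (Suc k) 0) * r^(ad (Suc k) d)) sums (r^(d+2) / (1 - r^2) + (\<Sum>i<d. r^(ad (Suc i) 0) * r^(ad (Suc i) d)))"
    unfolding f_def .
  moreover have "(\<Sum>i<d. r^(ad (Suc i) 0) * r^(ad (Suc i) d)) = (\<Sum>i<d. r^d)"
  proof (rule sum.cong)
    fix i assume "i \<in> {..<d}"
    hence e: "Suc i + (d - Suc i) = d" and "Suc i \<le> d" by auto
    hence "r^(ad (Suc i) 0) * r^(ad (Suc i) d) = r^(Suc i) * r^(d - Suc i)" by (simp add: ad_def)
    also have "\<dots> = r^d" by (subst power_add[symmetric]) (simp only: e)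
    finally show "r^(ad (Suc i) 0) * r^(ad (Suc i) d) = r^d" .
  qed simp
  ultimately show ?thesis by (simp add: add.commute)
qed

lemma K2_sums_le:
  assumes "\<bar>r\<bar> < 1"
  shows "(\<lambda>k. r^(ad (Suc k) i) * r^(ad (Suc k) (i+d))) sums K2full r i (i+d)"
proof -
  have r2: "r^2 \<noteq> 1" using assms by (metis abs_square_less_1 less_irrefl)
  have "(\<Sum>t<i. r^t * r^(t+d)) = r^d * (\<Sum>t<i. (r^2)^t)"
    by (simp add: sum_distrib_left power_add power_mult[symmetric] power2_eq_square algebra_simps)
  also have "\<dots> = r^d * ((1 - (r^2)^i) / (1 - r^2))" using r2 by (simp add: sum_gp_strict)
  finally have e: "(\<Sum>t<i. r^t * r^(t+d)) = r^d * ((1 - (r^2)^i) / (1 - r^2))" .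
  have "(\<lambda>k. r^(ad (Suc k) i) * r^(ad (Suc k) (i+d))) sums (real d * r^d + r^(d+2) / (1 - r^2) + (\<Sum>t<i. r^t * r^(t+d)))"
    using sums_shift_iter[where h="\<lambda>a b. r^a * r^b", OF K2_base[OF assms]] by simp
  moreover have "real d * r^d + r^(d+2) / (1 - r^2) + (\<Sum>t<i. r^t * r^(t+d)) = K2full r i (i+d)"
  proof -
    have 1: "1 - r^2 \<noteq> 0" using r2 by simp
    have "ad i (i+d) = d" by (simp add: ad_def)
    thus ?thesis unfolding K2full_def cc_def e using 1
      by (simp add: field_simps power_add power_mult[symmetric] power2_eq_square)
  qed
  ultimately show ?thesis by simp
qed

lemma K2_sums:
  assumes "\<bar>r\<bar> < 1"
  shows "(\<lambda>k. r^(ad (Suc k) j) * r^(ad (Suc k) j')) sums K2full r j j'"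
proof (cases "j \<le> j'")
  case True
  then obtain d where "j' = j + d" using le_Suc_ex by blast
  thus ?thesis using K2_sums_le[OF assms] by simp
next
  case False
  then obtain d where d: "j = j' + d" by (metis le_Suc_ex nat_le_linear)
  have "K2full r j j' = K2full r j' j" by (simp add: K2full_def ad_sym add.commute)
  thus ?thesis using K2_sums_le[OF assms, of j' d] d by (simp add: mult.commute)
qed



definition Mfull :: "real \<Rightarrow> nat \<Rightarrow> nat \<Rightarrow> real" where
  "Mfull r i d = r^d * (real d * (real d - 1) / 2) + r^(d+2) / (1 - r^2)^2
     + r^d * (real d * ((1 - (r^2)^i) / (1 - r^2))
              + (r^2 - real i * (r^2)^i + (real i - 1) * (r^2)^(Suc i)) / (1 - r^2)^2)"

lemma M_base:
  assumes "\<bar>r\<bar> < 1"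
  shows "(\<lambda>k. r^(ad (Suc k) 0) * r^(ad (Suc k) d) * real (ad (Suc k) d)) sums
          (r^d * (real d * (real d - 1) / 2) + r^(d+2) / (1 - r^2)^2)"
proof -
  have r2: "norm (r^2) < 1" using assms by (simp add: abs_square_less_1)
  define f where "f = (\<lambda>k. r^(ad (Suc k) 0) * r^(ad (Suc k) d) * real (ad (Suc k) d))"
  have "(\<lambda>i. r^(d+2) * (of_nat (Suc i) * (r^2)^i)) sums (r^(d+2) * (1 / (1 - r^2)^2))"
    by (rule sums_mult[OF geometric_deriv_sums[OF r2]])
  moreover have "(\<lambda>i. f (i+d)) = (\<lambda>i. r^(d+2) * (of_nat (Suc i) * (r^2)^i))"
  proof (rule ext)
    fix i
    have "f (i+d) = r^(Suc(i+d) + Suc i) * real (Suc i)"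
      by (simp add: f_def ad_def power_add)
    also have "Suc(i+d) + Suc i = (d+2) + 2*i" by simp
    finally have "f (i+d) = r^(d+2) * r^(2*i) * real (Suc i)" by (simp only: power_add)
    moreover have p: "(r^2)^i = r^(2*i)" by (simp only: power_mult)
    ultimately show "f (i+d) = r^(d+2) * (of_nat (Suc i) * (r^2)^i)"
      by (simp only: p mult_ac of_nat_def)
  qed
  ultimately have "(\<lambda>i. f (i+d)) sums (r^(d+2) / (1 - r^2)^2)" by simp
  hence h1: "f sums (r^(d+2) / (1 - r^2)^2 + (\<Sum>i<d. f i))"
    by (simp only: sums_iff_shift)
  have h2: "(\<Sum>i<d. f i) = (\<Sum>i<d. r^d * real (d - Suc i))"
  proof (rule sum.cong)
    fix i assume "i \<in> {..<d}"
    hence e: "Suc i + (d - Suc i) = d" and "Suc i \<le> d" by auto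
    hence "f i = r^(Suc i) * r^(d - Suc i) * real (d - Suc i)" by (simp add: ad_def f_def)
    also have "r^(Suc i) * r^(d - Suc i) = r^d" by (subst power_add[symmetric]) (simp only: e)
    finally show "f i = r^d * real (d - Suc i)" .
  qed simp
  have h3: "(\<Sum>i<d. r^d * real (d - Suc i)) = r^d * (real d * (real d - 1) / 2)"
    by (simp only: sum_distrib_left[symmetric] sum_count_down)
  have "f sums (r^(d+2) / (1 - r^2)^2 + r^d * (real d * (real d - 1) / 2))" using h1 unfolding h2 h3 .
  thus ?thesis unfolding f_def by (simp only: add.commute)
qed

lemma M_sums:
  assumes "\<bar>r\<bar> < 1"
  shows "(\<lambda>k. r^(ad (Suc k) i) * r^(ad (Suc k) (i+d)) * real (ad (Suc k) (i+d))) sums Mfull r i d"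
proof -
  have r2: "r^2 \<noteq> 1" using assms by (metis abs_square_less_1 less_irrefl)
  have 1: "1 - r^2 \<noteq> 0" using r2 by simp
  have "(\<Sum>t<i. r^t * r^(t+d) * real (t+d)) = r^d * (real d * (\<Sum>t<i. (r^2)^t) + (\<Sum>t<i. real t * (r^2)^t))"
    by (simp add: sum_distrib_left sum.distrib power_add power_mult[symmetric] power2_eq_square algebra_simps)
  also have "(\<Sum>t<i. (r^2)^t) = (1 - (r^2)^i) / (1 - r^2)" using r2 by (simp add: sum_gp_strict)
  also have "(\<Sum>t<i. real t * (r^2)^t) = (r^2 - real i * (r^2)^i + (real i - 1) * (r^2)^(Suc i)) / (1 - r^2)^2"
    using sum_tx[where i=i and x="r^2"] 1 by (simp add: field_simps)
  finally have e: "(\<Sum>t<i. r^t * r^(t+d) * real (t+d)) = r^d * (real d * ((1 - (r^2)^i) / (1 - r^2))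
              + (r^2 - real i * (r^2)^i + (real i - 1) * (r^2)^(Suc i)) / (1 - r^2)^2)" .
  have h: "(\<lambda>k. r^(ad (Suc k) i) * r^(ad (Suc k) (i+d)) * real (ad (Suc k) (i+d))) sums
     (r^d * (real d * (real d - 1) / 2) + r^(d+2) / (1 - r^2)^2 + (\<Sum>t<i. r^t * r^(t+d) * real (t+d)))"
    using sums_shift_iter[where h="\<lambda>a b. r^a * r^b * real b", OF M_base[OF assms]] by (simp del: of_nat_add)
  show ?thesis using h unfolding e Mfull_def .
qed

definition K3full :: "real \<Rightarrow> nat \<Rightarrow> nat \<Rightarrow> real" where
  "K3full r i d = (1 + 4*r^2 + r^4) / (1 - r^2)^2 * r^d + 3 * (1 + r^2) / (2 * (1 - r^2)) * real d * r^d
     + real d^2 / 2 * r^d - (1 + 3*r^2) / (1 - r^2)^2 * r^(2*i+d)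
     - real (2*i+d) * r^(2*i+d) / (1 - r^2)"

lemma K3_alg0:
  fixes u X Z d i :: real
  assumes "u \<noteq> 0"
  shows "X * (d * (d - 1) / 2) + X * (1-u) / u^2
     + X * (d * ((1 - Z*Z) / u) + ((1-u) - i * (Z*Z) + (i - 1) * ((Z*Z) * (1-u))) / u^2)
     + (1 + (1-u)) / u * (X * (d + (1 + (1-u)) / u) - (Z*Z) * X / u)
     - X * Z / u * (Z * (i + (1 + (1-u)) / u) - Z / u)
   = (1 + 4*(1-u) + (1-u)^2) / u^2 * X + 3 * (1 + (1-u)) / (2 * u) * d * X
     + d^2 / 2 * X - (1 + 3*(1-u)) / u^2 * ((Z*Z) * X)
     - (2*i+d) * ((Z*Z) * X) / u"
  using assms by (simp add: field_simps power2_eq_square)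

lemma K3_alg:
  fixes q X Y Z d i :: real
  assumes "1 - q \<noteq> 0" and "Z * Z = Y"
  shows "X * (d * (d - 1) / 2) + X * q / (1 - q)^2
     + X * (d * ((1 - Y) / (1 - q)) + (q - i * Y + (i - 1) * (Y * q)) / (1 - q)^2)
     + (1 + q) / (1 - q) * (X * (d + (1 + q) / (1 - q)) - Y * X / (1 - q))
     - X * Z / (1 - q) * (Z * (i + (1 + q) / (1 - q)) - Z / (1 - q))
   = (1 + 4*q + q^2) / (1 - q)^2 * X + 3 * (1 + q) / (2 * (1 - q)) * d * X
     + d^2 / 2 * X - (1 + 3*q) / (1 - q)^2 * (Y * X)
     - (2*i+d) * (Y * X) / (1 - q)"
  using K3_alg0[where u="1-q" and X=X and Z=Z and d=d and i=i] assms by simp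



lemma K3_sums:
  assumes r: "\<bar>r\<bar> < 1"
  shows "(\<lambda>k. r^(ad (Suc k) i) * K2full r (Suc k) (i+d)) sums K3full r i d"
proof -
  have r2: "r^2 \<noteq> 1" using r by (metis abs_square_less_1 less_irrefl)
  have 1: "1 - r^2 \<noteq> 0" using r2 by simp
  note s1 = M_sums[OF r, of i d]
  have s2: "(\<lambda>k. cc r * (r^(ad (Suc k) i) * r^(ad (Suc k) (i+d)))) sums (cc r * K2full r i (i+d))"
    by (rule sums_mult[OF K2_sums[OF r]])
  have s3: "(\<lambda>k. r^(i+d) / (1 - r^2) * (r^(ad (Suc k) i) * r^(ad (Suc k) 0))) sums (r^(i+d) / (1 - r^2) * K2full r i 0)"
    by (rule sums_mult[OF K2_sums[OF r]])
  have s: "(\<lambda>k. r^(ad (Suc k) i) * r^(ad (Suc k) (i+d)) * real (ad (Suc k) (i+d))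
              + cc r * (r^(ad (Suc k) i) * r^(ad (Suc k) (i+d)))
              - r^(i+d) / (1 - r^2) * (r^(ad (Suc k) i) * r^(ad (Suc k) 0)))
          sums (Mfull r i d + cc r * K2full r i (i+d) - r^(i+d) / (1 - r^2) * K2full r i 0)"
    by (intro sums_diff sums_add s1 s2 s3)
  have f: "(\<lambda>k. r^(ad (Suc k) i) * r^(ad (Suc k) (i+d)) * real (ad (Suc k) (i+d))
              + cc r * (r^(ad (Suc k) i) * r^(ad (Suc k) (i+d)))
              - r^(i+d) / (1 - r^2) * (r^(ad (Suc k) i) * r^(ad (Suc k) 0)))
          = (\<lambda>k. r^(ad (Suc k) i) * K2full r (Suc k) (i+d))"
    by (rule ext) (simp add: K2full_def ad_sym[of "Suc _"] power_add algebra_simps)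
  have v: "Mfull r i d + cc r * K2full r i (i+d) - r^(i+d) / (1 - r^2) * K2full r i 0 = K3full r i d"
  proof -
    have a1: "ad i (i+d) = d" "ad i 0 = i" by (auto simp: ad_def)
    have p1: "r^(d+2) = r^d * r^2" by (simp only: power_add)
    have p2: "(r^2)^(Suc i) = (r^2)^i * r^2" by (simp only: power_Suc2)
    have p5: "r^(2*i+d) = (r^2)^i * r^d" by (simp only: power_add power_mult)
    have p3: "r^(i+(i+d)) = (r^2)^i * r^d" using p5 by (simp add: mult_2 add.assoc)
    have p4: "r^(i+d) = r^d * r^i" by (simp add: power_add mult.commute)
    have p6: "r^(i+0) = r^i" by simp
    have p7: "r^4 = (r^2)^2" by (simp only: power_mult[symmetric]) simp
    note p = p1 p2 p3 p4 p5 p6 p7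
    have z: "r^i * r^i = (r^2)^i" by (simp only: power_mult_distrib[symmetric] power2_eq_square)
    show ?thesis
      unfolding Mfull_def K2full_def K3full_def cc_def a1 p
      using K3_alg[where q="r^2" and X="r^d" and Y="(r^2)^i" and Z="r^i" and d="real d" and i="real i", OF 1 z]
      by simp
  qed
  show ?thesis using s unfolding f v .
qed



definition K2p :: "real \<Rightarrow> nat \<Rightarrow> nat \<Rightarrow> nat \<Rightarrow> real" where
  "K2p r p j j' = (\<Sum>k=1..p. r^(ad k j) * r^(ad k j'))"

definition K3p :: "real \<Rightarrow> nat \<Rightarrow> nat \<Rightarrow> nat \<Rightarrow> real" where
  "K3p r p j j' = (\<Sum>k=1..p. \<Sum>l=1..p. r^(ad k j) * r^(ad l j') * r^(ad k l))"

lemma K2p_alt: "K2p r p j j' = (\<Sum>k<p. r^(ad (Suc k) j) * r^(ad (Suc k) j'))"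
  unfolding K2p_def by (simp add: sum.atLeast1_atMost_eq)

lemma K2p_lim: "\<bar>r\<bar> < 1 \<Longrightarrow> (\<lambda>p. K2p r p j j') \<longlonglongrightarrow> K2full r j j'"
  using K2_sums[of r j j'] unfolding K2p_alt sums_def .

lemma K2p_sym: "K2p r p j j' = K2p r p j' j"
  unfolding K2p_def by (simp add: mult.commute)

lemma K3p_eq: "K3p r p j j' = (\<Sum>k=1..p. r^(ad k j) * K2p r p k j')"
  unfolding K3p_def K2p_def sum_distrib_left
  by (intro sum.cong refl) (simp add: ad_def mult_ac)

lemma K3p_sym: "K3p r p j j' = K3p r p j' j"
proof -
  have "K3p r p j j' = (\<Sum>l=1..p. \<Sum>k=1..p. r^(ad k j) * r^(ad l j') * r^(ad k l))"
    unfolding K3p_def by (rule sum.swap)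
  also have "\<dots> = K3p r p j' j" unfolding K3p_def
    by (intro sum.cong refl) (simp add: ad_def mult_ac)
  finally show ?thesis .
qed

lemma n_pow_le:
  fixes y :: real assumes "0 \<le> y" "y < 1"
  shows "real n * y^n \<le> 1 / (1 - y)"
proof -
  have "real n * y^n = (\<Sum>i<n. y^n)" by simp
  also have "\<dots> \<le> (\<Sum>i<n. y^i)" by (rule sum_mono, rule power_decreasing) (use assms in auto)
  also have "\<dots> \<le> (\<Sum>i. y^i)"
    by (rule sum_le_suminf) (use summable_geometric[of y] assms in auto)
  also have "\<dots> = 1 / (1 - y)" using suminf_geometric[of y] assms by simp
  finally show ?thesis .
qed

lemma K2full_nonneg:
  assumes "0 \<le> y" "y < 1" shows "0 \<le> K2full y j j'"
proof -
  have h: "(\<lambda>k. y^(ad (Suc k) j) * y^(ad (Suc k) j')) sums K2full y j j'" using K2_sums assms by simp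
  have z: "(\<lambda>k. 0::real) sums 0" by simp
  show ?thesis by (rule sums_le[OF _ z h]) (use assms in simp)
qed

lemma K2full_le:
  assumes "0 \<le> y" "y < 1" shows "K2full y j j' \<le> y^(ad j j') * (real (ad j j') + cc y)"
proof -
  have "0 \<le> 1 - y^2" using assms by (simp add: abs_square_le_1)
  hence "0 \<le> y^(j+j') / (1 - y^2)" using assms by simp
  thus ?thesis unfolding K2full_def by simp
qed

lemma cc_nonneg: "0 \<le> y \<Longrightarrow> y < 1 \<Longrightarrow> 0 \<le> cc y"
  unfolding cc_def by (simp add: power_le_one abs_square_le_1)

lemma K2full_unif:
  assumes "0 \<le> y" "y < 1" shows "K2full y j j' \<le> 1 / (1 - y) + cc y"
proof -
  have "K2full y j j' \<le> real (ad j j') * y^(ad j j') + y^(ad j j') * cc y"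
    using K2full_le[OF assms] by (simp add: algebra_simps)
  also have "\<dots> \<le> 1 / (1 - y) + 1 * cc y"
    by (intro add_mono mult_right_mono n_pow_le assms cc_nonneg power_le_one) (use assms in auto)
  finally show ?thesis by simp
qed

lemma K2p_abs:
  assumes "\<bar>r\<bar> < 1" shows "\<bar>K2p r p j j'\<bar> \<le> K2full \<bar>r\<bar> j j'"
proof -
  have "\<bar>K2p r p j j'\<bar> \<le> (\<Sum>k<p. \<bar>r\<bar>^(ad (Suc k) j) * \<bar>r\<bar>^(ad (Suc k) j'))"
    unfolding K2p_alt by (rule order_trans[OF sum_abs]) (simp add: abs_mult power_abs)
  also have "\<dots> \<le> (\<Sum>k. \<bar>r\<bar>^(ad (Suc k) j) * \<bar>r\<bar>^(ad (Suc k) j'))"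
    by (rule sum_le_suminf) (use K2_sums[of "\<bar>r\<bar>" j j'] assms in \<open>auto simp: sums_iff\<close>)
  also have "\<dots> = K2full \<bar>r\<bar> j j'" using K2_sums[of "\<bar>r\<bar>" j j'] assms by (simp add: sums_iff)
  finally show ?thesis .
qed

lemma summable_shift_pow:
  fixes y :: real
  assumes "0 \<le> y" "y < 1" shows "summable (\<lambda>k. y^(ad (Suc k) i))"
proof -
  have "summable (\<lambda>k. y^k)" using summable_geometric[of y] assms by simp
  hence "summable (\<lambda>k. y * y^k)" by (rule summable_mult)
  moreover have "(\<lambda>k. y^(ad (Suc (k+i)) i)) = (\<lambda>k. y * y^k)"
    by (rule ext) (simp add: ad_def)
  ultimately have h: "summable (\<lambda>k. (\<lambda>k. y^(ad (Suc k) i)) (k+i))" by simp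
  have e: "summable (\<lambda>k. (\<lambda>k. y^(ad (Suc k) i)) (k+i)) = summable (\<lambda>k. y^(ad (Suc k) i))"
    by (rule summable_iff_shift)
  show ?thesis using h e by blast
qed

lemma K3p_lim:
  assumes r: "\<bar>r\<bar> < 1"
  shows "(\<lambda>p. K3p r p i (i+d)) \<longlonglongrightarrow> K3full r i d"
proof -
  define a where "a = (\<lambda>k p. if k < p then r^(ad (Suc k) i) * K2p r p (Suc k) (i+d) else 0)"
  define b where "b = (\<lambda>k. r^(ad (Suc k) i) * K2full r (Suc k) (i+d))"
  define C where "C = 1 / (1 - \<bar>r\<bar>) + cc \<bar>r\<bar>"
  have lim: "((\<lambda>p. a k p) \<longlongrightarrow> b k) sequentially" for k
  proof -
    have "(\<lambda>p. r^(ad (Suc k) i) * K2p r p (Suc k) (i+d)) \<longlonglongrightarrow> b k"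
      unfolding b_def by (intro tendsto_mult tendsto_const K2p_lim r)
    moreover have "eventually (\<lambda>p. r^(ad (Suc k) i) * K2p r p (Suc k) (i+d) = a k p) sequentially"
      unfolding a_def using eventually_gt_at_top[of k] by eventually_elim simp
    ultimately show ?thesis by (rule Lim_transform_eventually)
  qed
  have bnd: "norm (a k p) \<le> \<bar>r\<bar>^(ad (Suc k) i) * C" for k p
  proof -
    have "\<bar>K2p r p (Suc k) (i+d)\<bar> \<le> C"
      unfolding C_def using K2p_abs[OF r] K2full_unif[of "\<bar>r\<bar>"] r by (meson abs_ge_zero order_trans)
    thus ?thesis unfolding a_def by (auto simp: abs_mult power_abs intro: mult_left_mono)
  qed
  have sM: "summable (\<lambda>k. \<bar>r\<bar>^(ad (Suc k) i) * C)"
    by (intro summable_mult2 summable_shift_pow) (use r in auto)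
  have T: "((\<lambda>p. suminf (\<lambda>k. a k p)) \<longlongrightarrow> suminf b) sequentially"
    using tannerys_theorem[of a b _ "\<lambda>k. \<bar>r\<bar>^(ad (Suc k) i) * C", OF lim _ sM] bnd
    by (auto intro: always_eventually)
  have "suminf (\<lambda>k. a k p) = K3p r p i (i+d)" for p
  proof -
    have "suminf (\<lambda>k. a k p) = (\<Sum>k<p. a k p)"
      by (rule suminf_finite) (auto simp: a_def)
    also have "\<dots> = (\<Sum>k<p. r^(ad (Suc k) i) * K2p r p (Suc k) (i+d))" by (simp add: a_def)
    also have "\<dots> = K3p r p i (i+d)" unfolding K3p_eq by (simp add: sum.atLeast1_atMost_eq)
    finally show ?thesis .
  qed
  moreover have "suminf b = K3full r i d" using K3_sums[OF r] unfolding b_def by (simp add: sums_iff)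
  ultimately show ?thesis using T by simp
qed



lemma abs_mult_le_sq: "\<bar>x\<bar> * \<bar>y\<bar> \<le> ((x::real)^2 + y^2) / 2"
proof -
  have "0 \<le> (\<bar>x\<bar> - \<bar>y\<bar>)^2" by simp
  thus ?thesis by (simp add: power2_eq_square algebra_simps)
qed

lemma sum_w_le1:
  fixes w :: "nat \<Rightarrow> real"
  assumes "summable w" "\<And>d. 0 \<le> w d"
  shows "(\<Sum>j<j'. w (j' - j)) \<le> (\<Sum>i. w (Suc i))"
proof -
  have "(\<Sum>j<j'. w (j' - j)) = (\<Sum>j<j'. (\<lambda>i. w (Suc i)) (j' - Suc j))"
    by (rule sum.cong) (auto simp: Suc_diff_Suc)
  also have "\<dots> = (\<Sum>i<j'. w (Suc i))" by (rule sum.nat_diff_reindex)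
  also have "\<dots> \<le> (\<Sum>i. w (Suc i))"
    by (rule sum_le_suminf) (use assms in \<open>auto simp: summable_Suc_iff\<close>)
  finally show ?thesis .
qed

lemma sum_w_le2:
  fixes w :: "nat \<Rightarrow> real"
  assumes "summable w" "\<And>d. 0 \<le> w d"
  shows "(\<Sum>i\<in>{Suc j..n}. w (i - j)) \<le> (\<Sum>i. w (Suc i))"
proof (cases "j \<le> n")
  case True
  have "(\<Sum>i\<in>{Suc j..n}. w (i - j)) = (\<Sum>i\<in>{1+j..(n-j)+j}. w (i - j))" using True by simp
  also have "\<dots> = (\<Sum>i\<in>{1..n-j}. w i)" by (subst sum.shift_bounds_cl_nat_ivl) simp
  also have "\<dots> = (\<Sum>i<n-j. w (Suc i))" by (simp add: sum.atLeast1_atMost_eq)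
  also have "\<dots> \<le> (\<Sum>i. w (Suc i))"
    by (rule sum_le_suminf) (use assms in \<open>auto simp: summable_Suc_iff\<close>)
  finally show ?thesis .
next
  case False
  hence "{Suc j..n} = {}" by auto
  thus ?thesis using suminf_nonneg[of "\<lambda>i. w (Suc i)"] assms by (simp add: summable_Suc_iff)
qed

lemma conv_summable:
  fixes a w :: "nat \<Rightarrow> real"
  assumes sa: "summable (\<lambda>j. a j ^ 2)" and sw: "summable w" and w0: "\<And>d. 0 \<le> w d"
  shows "summable (\<lambda>j'. \<Sum>j<j'. \<bar>a j\<bar> * \<bar>a j'\<bar> * w (j' - j))"
proof (rule bounded_imp_summable)
  define W where "W = (\<Sum>i. w (Suc i))"
  define A where "A = (\<Sum>j. a j ^ 2)"
  show "0 \<le> (\<Sum>j<j'. \<bar>a j\<bar> * \<bar>a j'\<bar> * w (j' - j))" for j'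
    by (intro sum_nonneg mult_nonneg_nonneg w0) auto
  fix n
  have A0: "(\<Sum>j<m. a j ^ 2) \<le> A" for m
    unfolding A_def by (rule sum_le_suminf) (use sa in auto)
  have A1: "(\<Sum>j\<le>m. a j ^ 2) \<le> A" for m
    unfolding A_def by (rule sum_le_suminf) (use sa in auto)
  have W0: "0 \<le> W" unfolding W_def using suminf_nonneg[of "\<lambda>i. w (Suc i)"] sw w0 by (simp add: summable_Suc_iff)
  have "(\<Sum>j'\<le>n. \<Sum>j<j'. \<bar>a j\<bar> * \<bar>a j'\<bar> * w (j' - j))
      \<le> (\<Sum>j'\<le>n. \<Sum>j<j'. (a j ^ 2 / 2) * w (j' - j) + (a j' ^ 2 / 2) * w (j' - j))"
  proof (intro sum_mono)
    fix j' j
    have "\<bar>a j\<bar> * \<bar>a j'\<bar> * w (j' - j) \<le> ((a j ^ 2 + a j' ^ 2) / 2) * w (j' - j)"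
      by (intro mult_right_mono abs_mult_le_sq w0)
    thus "\<bar>a j\<bar> * \<bar>a j'\<bar> * w (j' - j) \<le> (a j ^ 2 / 2) * w (j' - j) + (a j' ^ 2 / 2) * w (j' - j)"
      by (simp add: field_simps)
  qed
  also have "\<dots> = (\<Sum>j'\<le>n. \<Sum>j<j'. (a j ^ 2 / 2) * w (j' - j)) + (\<Sum>j'\<le>n. (a j' ^ 2 / 2) * (\<Sum>j<j'. w (j' - j)))"
    by (simp add: sum.distrib sum_distrib_left)
  also have "(\<Sum>j'\<le>n. \<Sum>j<j'. (a j ^ 2 / 2) * w (j' - j)) = (\<Sum>j<n. (a j ^ 2 / 2) * (\<Sum>i\<in>{Suc j..n}. w (i - j)))"
    by (simp add: sum.nested_swap' sum_distrib_left)
  also have "\<dots> \<le> (\<Sum>j<n. (a j ^ 2 / 2) * W)"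
    unfolding W_def by (intro sum_mono mult_left_mono sum_w_le2 sw w0) auto
  also have "(\<Sum>j'\<le>n. (a j' ^ 2 / 2) * (\<Sum>j<j'. w (j' - j))) \<le> (\<Sum>j'\<le>n. (a j' ^ 2 / 2) * W)"
    unfolding W_def by (intro sum_mono mult_left_mono sum_w_le1 sw w0) auto
  also have "(\<Sum>j<n. (a j ^ 2 / 2) * W) + (\<Sum>j'\<le>n. (a j' ^ 2 / 2) * W)
      = (\<Sum>j<n. a j ^ 2) * (W / 2) + (\<Sum>j\<le>n. a j ^ 2) * (W / 2)"
    by (simp add: sum_distrib_right sum_divide_distrib)
  also have "\<dots> \<le> A * (W / 2) + A * (W / 2)"
    by (intro add_mono mult_right_mono A0 A1) (use W0 in auto)
  finally show "(\<Sum>j'\<le>n. \<Sum>j<j'. \<bar>a j\<bar> * \<bar>a j'\<bar> * w (j' - j)) \<le> A * (W / 2) + A * (W / 2)" by simp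
qed



lemma sq_summable0:
  assumes "summable (\<lambda>j. b (Suc j)^2)"
  shows "summable (\<lambda>j. (if j = 0 then 0 else b j :: real)^2)"
proof -
  have h: "summable (\<lambda>j. (\<lambda>j. (if j = 0 then 0 else b j :: real)^2) (Suc j))" using assms by simp
  show ?thesis by (rule summable_Suc_iff[of "\<lambda>j. (if j = 0 then 0 else b j :: real)^2", THEN iffD1, OF h])
qed

lemma pair_bound_summable:
  fixes b w :: "nat \<Rightarrow> real"
  assumes sb: "summable (\<lambda>j. b (Suc j)^2)" and sw: "summable w" and w0: "\<And>d. 0 \<le> w d"
  shows "summable (\<lambda>j'. \<Sum>j\<in>{1..<j'}. \<bar>b j\<bar> * \<bar>b j'\<bar> * w (j' - j))"
proof -
  define c where "c = (\<lambda>j. if j = 0 then 0 else b j)"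
  have sc: "summable (\<lambda>j. c j ^ 2)" unfolding c_def using sq_summable0[OF sb] .
  have S: "summable (\<lambda>j'. \<Sum>j<j'. \<bar>c j\<bar> * \<bar>c j'\<bar> * w (j' - j))"
    by (rule conv_summable[OF sc sw w0])
  show ?thesis
  proof (rule summable_comparison_test'[OF S])
    fix j'
    have "(\<Sum>j\<in>{1..<j'}. \<bar>b j\<bar> * \<bar>b j'\<bar> * w (j' - j)) = (\<Sum>j\<in>{1..<j'}. \<bar>c j\<bar> * \<bar>c j'\<bar> * w (j' - j))"
      by (rule sum.cong) (auto simp: c_def)
    also have "\<dots> \<le> (\<Sum>j<j'. \<bar>c j\<bar> * \<bar>c j'\<bar> * w (j' - j))"
      by (rule sum_mono2) (auto intro!: mult_nonneg_nonneg w0)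
    finally show "norm (\<Sum>j\<in>{1..<j'}. \<bar>b j\<bar> * \<bar>b j'\<bar> * w (j' - j)) \<le> (\<Sum>j<j'. \<bar>c j\<bar> * \<bar>c j'\<bar> * w (j' - j))"
      by (simp add: sum_nonneg w0)
  qed
qed

lemma pair_summable:
  fixes b w :: "nat \<Rightarrow> real" and g :: "nat \<Rightarrow> nat \<Rightarrow> real"
  assumes sb: "summable (\<lambda>j. b (Suc j)^2)" and sw: "summable w" and w0: "\<And>d. 0 \<le> w d"
    and g: "\<And>j j'. 1 \<le> j \<Longrightarrow> j < j' \<Longrightarrow> \<bar>g j j'\<bar> \<le> w (j' - j)"
  shows "summable (\<lambda>j'. \<Sum>j\<in>{1..<j'}. b j * b j' * g j j')"
proof (rule summable_comparison_test'[OF pair_bound_summable[OF sb sw w0]])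
  fix j'
  have "norm (\<Sum>j\<in>{1..<j'}. b j * b j' * g j j') \<le> (\<Sum>j\<in>{1..<j'}. \<bar>b j * b j' * g j j'\<bar>)"
    by (simp add: sum_abs)
  also have "\<dots> \<le> (\<Sum>j\<in>{1..<j'}. \<bar>b j\<bar> * \<bar>b j'\<bar> * w (j' - j))"
    by (rule sum_mono) (auto simp: abs_mult intro!: mult_left_mono g)
  finally show "norm (\<Sum>j\<in>{1..<j'}. b j * b j' * g j j') \<le> (\<Sum>j\<in>{1..<j'}. \<bar>b j\<bar> * \<bar>b j'\<bar> * w (j' - j))" .
qed

lemma sym_sum:
  fixes G :: "nat \<Rightarrow> nat \<Rightarrow> real"
  assumes sym: "\<And>j j'. G j j' = G j' j"
  shows "(\<Sum>j=1..p. \<Sum>j'=1..p. G j j') = (\<Sum>j'=1..p. G j' j' + 2 * (\<Sum>j\<in>{1..<j'}. G j j'))"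
proof (induction p)
  case 0 thus ?case by simp
next
  case (Suc p)
  have I: "{1..Suc p} = insert (Suc p) {1..p}" by auto
  have "(\<Sum>j=1..Suc p. \<Sum>j'=1..Suc p. G j j')
     = (\<Sum>j=1..Suc p. G j (Suc p) + (\<Sum>j'=1..p. G j j'))"
    unfolding I by (intro sum.cong refl) simp
  also have "\<dots> = (\<Sum>j=1..Suc p. G j (Suc p)) + (\<Sum>j=1..Suc p. \<Sum>j'=1..p. G j j')"
    by (simp add: sum.distrib)
  also have "(\<Sum>j=1..Suc p. \<Sum>j'=1..p. G j j') = (\<Sum>j'=1..p. G (Suc p) j') + (\<Sum>j=1..p. \<Sum>j'=1..p. G j j')"
    unfolding I by simp
  also have "(\<Sum>j'=1..p. G (Suc p) j') = (\<Sum>j=1..p. G j (Suc p))"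
    by (intro sum.cong refl) (simp add: sym)
  also have "(\<Sum>j=1..Suc p. G j (Suc p)) = G (Suc p) (Suc p) + (\<Sum>j=1..p. G j (Suc p))"
    unfolding I by simp
  finally have "(\<Sum>j=1..Suc p. \<Sum>j'=1..Suc p. G j j')
     = G (Suc p) (Suc p) + 2 * (\<Sum>j=1..p. G j (Suc p)) + (\<Sum>j=1..p. \<Sum>j'=1..p. G j j')"
    by simp
  also have "\<dots> = (\<Sum>j'=1..Suc p. G j' j' + 2 * (\<Sum>j\<in>{1..<j'}. G j j'))"
    unfolding Suc.IH I by (simp add: atLeastLessThanSuc_atLeastAtMost)
  finally show ?case .
qed

lemma main_lim:
  fixes b :: "nat \<Rightarrow> real" and K :: "nat \<Rightarrow> nat \<Rightarrow> nat \<Rightarrow> real" and L :: "nat \<Rightarrow> nat \<Rightarrow> real"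
    and w :: "nat \<Rightarrow> real"
  assumes sb: "summable (\<lambda>j. b (Suc j)^2)"
    and sym: "\<And>p j j'. K p j j' = K p j' j"
    and lim: "\<And>j j'. 1 \<le> j \<Longrightarrow> j \<le> j' \<Longrightarrow> (\<lambda>p. K p j j') \<longlonglongrightarrow> L j j'"
    and bnd: "\<And>p j j'. 1 \<le> j \<Longrightarrow> j \<le> j' \<Longrightarrow> \<bar>K p j j'\<bar> \<le> w (j' - j)"
    and sw: "summable w" and w0: "\<And>d. 0 \<le> w d"
  shows "(\<lambda>p. \<Sum>j=1..p. \<Sum>j'=1..p. b j * b j' * K p j j') \<longlonglongrightarrow>
           (\<Sum>j'. (if j' = 0 then 0 else b j'^2 * L j' j') + 2 * (\<Sum>j\<in>{1..<j'}. b j * b j' * L j j'))"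
proof -
  define a where "a = (\<lambda>j' p. if j' \<le> p then (if j' = 0 then 0 else b j'^2 * K p j' j')
                                  + 2 * (\<Sum>j\<in>{1..<j'}. b j * b j' * K p j j') else 0)"
  define F where "F = (\<lambda>j'. (if j' = 0 then 0 else b j'^2 * L j' j') + 2 * (\<Sum>j\<in>{1..<j'}. b j * b j' * L j j'))"
  define M where "M = (\<lambda>j'. b j'^2 * w 0 + 2 * (\<Sum>j\<in>{1..<j'}. \<bar>b j\<bar> * \<bar>b j'\<bar> * w (j' - j)))"
  have la: "((\<lambda>p. a j' p) \<longlongrightarrow> F j') sequentially" for j'
  proof -
    have "(\<lambda>p. (if j' = 0 then 0 else b j'^2 * K p j' j') + 2 * (\<Sum>j\<in>{1..<j'}. b j * b j' * K p j j')) \<longlonglongrightarrow> F j'"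
      unfolding F_def
    proof (intro tendsto_add tendsto_mult tendsto_const tendsto_sum)
      show "(\<lambda>p. if j' = 0 then 0 else b j'^2 * K p j' j') \<longlonglongrightarrow> (if j' = 0 then 0 else b j'^2 * L j' j')"
        by (cases "j' = 0") (auto intro!: tendsto_mult tendsto_const lim)
      fix j assume "j \<in> {1..<j'}"
      thus "(\<lambda>p. K p j j') \<longlonglongrightarrow> L j j'" by (intro lim) auto
    qed
    moreover have "eventually (\<lambda>p. (if j' = 0 then 0 else b j'^2 * K p j' j') + 2 * (\<Sum>j\<in>{1..<j'}. b j * b j' * K p j j') = a j' p) sequentially"
      unfolding a_def using eventually_ge_at_top[of j'] by eventually_elim simp
    ultimately show ?thesis by (rule Lim_transform_eventually)
  qed
  have ba: "norm (a j' p) \<le> M j'" for j' p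
  proof -
    have d: "\<bar>if j' = 0 then 0 else b j'^2 * K p j' j'\<bar> \<le> b j'^2 * w 0"
      using bnd[of j' j' p] w0[of 0] by (auto simp: abs_mult intro: mult_left_mono)
    have s: "\<bar>\<Sum>j\<in>{1..<j'}. b j * b j' * K p j j'\<bar> \<le> (\<Sum>j\<in>{1..<j'}. \<bar>b j\<bar> * \<bar>b j'\<bar> * w (j' - j))"
      by (rule order_trans[OF sum_abs], rule sum_mono) (auto simp: abs_mult intro!: mult_left_mono bnd)
    have "0 \<le> M j'" unfolding M_def by (intro add_nonneg_nonneg mult_nonneg_nonneg sum_nonneg w0) auto
    thus ?thesis unfolding a_def M_def using d s by (auto intro!: order_trans[OF abs_triangle_ineq])
  qed
  have sM: "summable M"
  proof -
    have "summable (\<lambda>j. b j ^ 2)"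
      by (rule summable_Suc_iff[of "\<lambda>j. b j ^ 2", THEN iffD1, OF sb])
    thus ?thesis unfolding M_def
      by (intro summable_add summable_mult summable_mult2 pair_bound_summable[OF sb sw w0])
  qed
  have T: "((\<lambda>p. suminf (\<lambda>j'. a j' p)) \<longlongrightarrow> suminf F) sequentially"
    using tannerys_theorem[of a F _ M, OF la _ sM] ba by (auto intro: always_eventually)
  have "suminf (\<lambda>j'. a j' p) = (\<Sum>j=1..p. \<Sum>j'=1..p. b j * b j' * K p j j')" for p
  proof -
    have "suminf (\<lambda>j'. a j' p) = (\<Sum>j'\<in>{1..p}. a j' p)"
      by (rule suminf_finite) (auto simp: a_def not_le)
    also have "\<dots> = (\<Sum>j'=1..p. b j' * b j' * K p j' j' + 2 * (\<Sum>j\<in>{1..<j'}. b j * b j' * K p j j'))"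
      by (intro sum.cong refl) (auto simp: a_def power2_eq_square)
    also have "\<dots> = (\<Sum>j=1..p. \<Sum>j'=1..p. b j * b j' * K p j j')"
      by (rule sym_sum[symmetric]) (simp add: sym mult.commute)
    finally show ?thesis .
  qed
  thus ?thesis using T unfolding F_def by simp
qed



lemma summable_pows:
  fixes y :: real assumes y: "0 \<le> y" "y < 1"
  shows "summable (\<lambda>n. y^n)" "summable (\<lambda>n. real n * y^n)" "summable (\<lambda>n. real n ^ 2 * y^n)"
proof -
  have s0: "summable (\<lambda>n. (\<lambda>n. 1::real) n * x^n)" if "norm x < 1" for x :: real
    using summable_geometric[OF that] by simp
  have s1: "summable (\<lambda>n. diffs (\<lambda>n. 1::real) n * x^n)" if "norm x < 1" for x :: real
    by (rule termdiff_converges[OF that s0])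
  have s2: "summable (\<lambda>n. diffs (diffs (\<lambda>n. 1::real)) n * x^n)" if "norm x < 1" for x :: real
    by (rule termdiff_converges[OF that s1])
  have ny: "norm y < 1" using y by simp
  show "summable (\<lambda>n. y^n)" using summable_geometric[OF ny] .
  show "summable (\<lambda>n. real n * y^n)"
  proof (rule summable_comparison_test'[OF s1[OF ny]])
    fix n show "norm (real n * y^n) \<le> diffs (\<lambda>n. 1::real) n * y^n"
      using y by (auto simp: diffs_def abs_mult intro!: mult_right_mono)
  qed
  show "summable (\<lambda>n. real n ^ 2 * y^n)"
  proof (rule summable_comparison_test'[OF s2[OF ny]])
    fix n
    have "real n ^ 2 \<le> real (Suc n) * real (Suc (Suc n))" by (simp add: power2_eq_square mult_mono)
    thus "norm (real n ^ 2 * y^n) \<le> diffs (diffs (\<lambda>n. 1::real)) n * y^n"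
      using y by (auto simp: diffs_def abs_mult intro!: mult_right_mono)
  qed
qed

lemma diag_sums:
  fixes b h :: "nat \<Rightarrow> real"
  assumes sb: "summable (\<lambda>j. b (Suc j)^2)" and hb: "\<And>j. \<bar>h j\<bar> \<le> H"
  shows "(\<lambda>j'. if j' = 0 then 0 else b j'^2 * h j') sums (\<Sum>j. b (Suc j)^2 * h (Suc j))"
proof -
  have "summable (\<lambda>j. b (Suc j)^2 * h (Suc j))"
  proof (rule summable_comparison_test'[of "\<lambda>j. b (Suc j)^2 * H"])
    show "summable (\<lambda>j. b (Suc j)^2 * H)" using sb by (rule summable_mult2)
    fix j show "norm (b (Suc j)^2 * h (Suc j)) \<le> b (Suc j)^2 * H"
      using hb[of "Suc j"] by (simp add: abs_mult mult_left_mono)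
  qed
  hence "(\<lambda>j. (\<lambda>j'. if j' = 0 then 0 else b j'^2 * h j') (Suc j)) sums (\<Sum>j. b (Suc j)^2 * h (Suc j))"
    by (simp add: summable_sums)
  thus ?thesis by (subst (asm) sums_Suc_iff) simp
qed

lemma betaf_sums:
  assumes sb: "summable (\<lambda>j. b (Suc j)^2)" and x: "\<bar>x\<bar> \<le> 1"
  shows "(\<lambda>j'. if j' = 0 then 0 else b j'^2 * x^j') sums betaf b x"
  unfolding betaf_def using diag_sums[OF sb, of "\<lambda>j. x^j" 1] x by (simp add: power_abs power_le_one)

lemma betaf1_sums:
  assumes sb: "summable (\<lambda>j. b (Suc j)^2)" and x: "0 \<le> x" "x < 1"
  shows "(\<lambda>j'. if j' = 0 then 0 else b j'^2 * (real j' * x^j')) sums betaf1 b x"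
proof -
  have hb: "\<bar>real j * x^j\<bar> \<le> 1 / (1 - x)" for j
  proof -
    have "\<bar>real j * x^j\<bar> = real j * x^j" using x by (intro abs_of_nonneg) simp
    thus ?thesis using n_pow_le[OF x] by simp
  qed
  have s: "(\<lambda>j'. if j' = 0 then 0 else b j'^2 * (real j' * x^j')) sums (\<Sum>j. b (Suc j)^2 * (real (Suc j) * x^(Suc j)))"
    by (rule diag_sums[OF sb hb])
  have "(\<lambda>j. b (Suc j)^2 * (real (Suc j) * x^(Suc j))) = (\<lambda>j. real (Suc j) * b (Suc j)^2 * x^(Suc j))"
    by (rule ext) (simp only: mult_ac)
  thus ?thesis using s unfolding betaf1_def by simp
qed

lemma pair_sums:
  fixes b w :: "nat \<Rightarrow> real" and g :: "nat \<Rightarrow> nat \<Rightarrow> real"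
  assumes sb: "summable (\<lambda>j. b (Suc j)^2)" and sw: "summable w" and w0: "\<And>d. 0 \<le> w d"
    and g: "\<And>j j'. 1 \<le> j \<Longrightarrow> j < j' \<Longrightarrow> \<bar>g j j'\<bar> \<le> w (j' - j)"
  shows "(\<lambda>j'. \<Sum>j\<in>{1..<j'}. b j * b j' * g j j') sums (\<Sum>j'. \<Sum>j\<in>{1..<j'}. b j * b j' * g j j')"
  using pair_summable[OF sb sw w0 g] by (simp add: summable_sums)



lemma kappa2_eq: "kappa2 b r p = (\<Sum>j=1..p. \<Sum>j'=1..p. b j * b j' * K2p r p j j')"
proof -
  have "kappa2 b r p = (\<Sum>k=1..p. \<Sum>l=1..p. \<Sum>l'=1..p. (b l * r^(ad k l)) * (b l' * r^(ad k l')))"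
    unfolding kappa2_def power2_eq_square sum_product ..
  also have "\<dots> = (\<Sum>l=1..p. \<Sum>k=1..p. \<Sum>l'=1..p. (b l * r^(ad k l)) * (b l' * r^(ad k l')))"
    by (rule sum.swap)
  also have "\<dots> = (\<Sum>l=1..p. \<Sum>l'=1..p. \<Sum>k=1..p. (b l * r^(ad k l)) * (b l' * r^(ad k l')))"
    by (intro sum.cong refl sum.swap)
  also have "\<dots> = (\<Sum>j=1..p. \<Sum>j'=1..p. b j * b j' * K2p r p j j')"
    unfolding K2p_def sum_distrib_left by (intro sum.cong refl) (simp add: mult_ac)
  finally show ?thesis .
qed

lemma kappa3_eq: "kappa3 b r p = (\<Sum>j=1..p. \<Sum>j'=1..p. b j * b j' * K3p r p j j')"
proof -
  let ?f = "\<lambda>k l j j'. b j * b j' * r^(ad k j) * r^(ad l j') * r^(ad k l)"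
  have "kappa3 b r p = (\<Sum>k=1..p. \<Sum>l=1..p. \<Sum>j=1..p. \<Sum>j'=1..p. ?f k l j j')"
    unfolding kappa3_def ..
  also have "\<dots> = (\<Sum>k=1..p. \<Sum>j=1..p. \<Sum>l=1..p. \<Sum>j'=1..p. ?f k l j j')"
    by (intro sum.cong refl sum.swap)
  also have "\<dots> = (\<Sum>j=1..p. \<Sum>k=1..p. \<Sum>l=1..p. \<Sum>j'=1..p. ?f k l j j')"
    by (rule sum.swap)
  also have "\<dots> = (\<Sum>j=1..p. \<Sum>k=1..p. \<Sum>j'=1..p. \<Sum>l=1..p. ?f k l j j')"
    by (intro sum.cong refl sum.swap)
  also have "\<dots> = (\<Sum>j=1..p. \<Sum>j'=1..p. \<Sum>k=1..p. \<Sum>l=1..p. ?f k l j j')"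
    by (intro sum.cong refl sum.swap)
  also have "\<dots> = (\<Sum>j=1..p. \<Sum>j'=1..p. b j * b j' * K3p r p j j')"
    unfolding K3p_def sum_distrib_left by (intro sum.cong refl) (simp add: mult_ac)
  finally show ?thesis .
qed

lemma K3p_abs:
  assumes r: "\<bar>r\<bar> < 1" shows "\<bar>K3p r p i (i+d)\<bar> \<le> K3full \<bar>r\<bar> i d"
proof -
  have y: "\<bar>\<bar>r\<bar>\<bar> < 1" using r by simp
  have "\<bar>K3p r p i (i+d)\<bar> \<le> (\<Sum>k=1..p. \<bar>r^(ad k i) * K2p r p k (i+d)\<bar>)"
    unfolding K3p_eq by (rule sum_abs)
  also have "\<dots> \<le> (\<Sum>k=1..p. \<bar>r\<bar>^(ad k i) * K2full \<bar>r\<bar> k (i+d))"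
    by (rule sum_mono) (simp add: abs_mult power_abs mult_left_mono K2p_abs[OF r])
  also have "\<dots> = (\<Sum>k<p. \<bar>r\<bar>^(ad (Suc k) i) * K2full \<bar>r\<bar> (Suc k) (i+d))"
    by (simp add: sum.atLeast1_atMost_eq)
  also have "\<dots> \<le> (\<Sum>k. \<bar>r\<bar>^(ad (Suc k) i) * K2full \<bar>r\<bar> (Suc k) (i+d))"
    by (rule sum_le_suminf) (use K3_sums[OF y, of i d] r in \<open>auto simp: sums_iff intro!: mult_nonneg_nonneg K2full_nonneg\<close>)
  also have "\<dots> = K3full \<bar>r\<bar> i d" using K3_sums[OF y, of i d] by (simp add: sums_iff)
  finally show ?thesis .
qed

definition w3 :: "real \<Rightarrow> nat \<Rightarrow> real" where
  "w3 y d = ((1 + 4*y^2 + y^4) / (1 - y^2)^2 + 3 * (1 + y^2) / (2 * (1 - y^2)) * real d + real d^2 / 2) * y^d"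

lemma K3full_le:
  assumes y: "0 \<le> y" "y < 1" shows "K3full y i d \<le> w3 y d"
proof -
  have q: "0 < 1 - y^2" using y by (simp add: abs_square_less_1)
  have "0 \<le> (1 + 3*y^2) / (1 - y^2)^2 * y^(2*i+d)" using y q by simp
  moreover have "0 \<le> real (2*i+d) * y^(2*i+d) / (1 - y^2)" using y q by simp
  ultimately show ?thesis unfolding K3full_def w3_def by (simp add: algebra_simps)
qed

lemma w3_summable: "0 \<le> y \<Longrightarrow> y < 1 \<Longrightarrow> summable (w3 y)"
  unfolding w3_def distrib_right
  by (intro summable_add summable_mult summable_pows) (auto simp: mult.assoc intro!: summable_mult summable_pows)

lemma w3_nonneg: "0 \<le> y \<Longrightarrow> y < 1 \<Longrightarrow> 0 \<le> w3 y d"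
proof -
  assume y: "0 \<le> y" "y < 1"
  have q: "0 < 1 - y^2" using y by (simp add: abs_square_less_1)
  show ?thesis unfolding w3_def using y q by (intro mult_nonneg_nonneg add_nonneg_nonneg) auto
qed



context
  fixes b :: "nat \<Rightarrow> real" and r :: real
  assumes sb: "summable (\<lambda>j. b (Suc j)^2)" and r: "\<bar>r\<bar> < 1"
begin

private lemma y0: "0 \<le> \<bar>r\<bar>" and y1: "\<bar>r\<bar> < 1" using r by auto

private lemma sp: "summable (\<lambda>n. \<bar>r\<bar>^n)" "summable (\<lambda>n. real n * \<bar>r\<bar>^n)" "summable (\<lambda>n. real n ^ 2 * \<bar>r\<bar>^n)"
  using summable_pows[OF y0 y1] by auto

lemma P0_sums: "(\<lambda>j'. \<Sum>j\<in>{1..<j'}. b j * b j' * r^(j' - j)) sums b1 b r"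
  unfolding b1_def
  by (rule pair_sums[OF sb sp(1), of "\<lambda>j j'. r^(j' - j)"]) (auto simp: power_abs)

lemma P1_sums: "(\<lambda>j'. \<Sum>j\<in>{1..<j'}. b j * b j' * r^(j' - j) * real (j' - j)) sums b1d b r"
proof -
  have "(\<lambda>j'. \<Sum>j\<in>{1..<j'}. b j * b j' * (r^(j' - j) * real (j' - j))) sums
        (\<Sum>j'. \<Sum>j\<in>{1..<j'}. b j * b j' * (r^(j' - j) * real (j' - j)))"
    by (rule pair_sums[OF sb sp(2)]) (auto simp: power_abs abs_mult mult.commute)
  thus ?thesis unfolding b1d_def by (simp only: mult.assoc)
qed

lemma P2_sums: "(\<lambda>j'. \<Sum>j\<in>{1..<j'}. b j * b j' * r^(j' - j) * real (j' - j)^2) sums bdd2 b r"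
proof -
  have "(\<lambda>j'. \<Sum>j\<in>{1..<j'}. b j * b j' * (r^(j' - j) * real (j' - j)^2)) sums
        (\<Sum>j'. \<Sum>j\<in>{1..<j'}. b j * b j' * (r^(j' - j) * real (j' - j)^2))"
    by (rule pair_sums[OF sb sp(3)]) (auto simp: power_abs abs_mult mult.commute)
  thus ?thesis unfolding bdd2_def by (simp only: mult.assoc)
qed

lemma Q0_sums: "(\<lambda>j'. \<Sum>j\<in>{1..<j'}. b j * b j' * r^(j' + j)) sums b2 b r"
  unfolding b2_def
proof (rule pair_sums[OF sb sp(1)])
  fix j j' :: nat assume "1 \<le> j" "j < j'"
  hence "\<bar>r\<bar>^(j' + j) \<le> \<bar>r\<bar>^(j' - j)" using r by (intro power_decreasing) auto
  thus "\<bar>r^(j' + j)\<bar> \<le> \<bar>r\<bar>^(j' - j)" by (simp add: power_abs)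
qed (auto)

lemma Q1_sums: "(\<lambda>j'. \<Sum>j\<in>{1..<j'}. b j * b j' * r^(j' + j) * real (j' + j)) sums b2d b r"
proof -
  define y where "y = \<bar>r\<bar>"
  have y: "0 \<le> y" "y < 1" unfolding y_def using r by auto
  have q: "0 \<le> y^2" "y^2 < 1" using y by (auto simp: abs_square_less_1)
  define w where "w = (\<lambda>d. real d * y^d + 2 / (1 - y^2) * y^d)"
  have sw: "summable w" unfolding w_def y_def by (intro summable_add summable_mult sp)
  have w0: "0 \<le> w d" for d unfolding w_def using y q by (intro add_nonneg_nonneg mult_nonneg_nonneg) auto
  have "(\<lambda>j'. \<Sum>j\<in>{1..<j'}. b j * b j' * (r^(j' + j) * real (j' + j))) sums
        (\<Sum>j'. \<Sum>j\<in>{1..<j'}. b j * b j' * (r^(j' + j) * real (j' + j)))"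
  proof (rule pair_sums[OF sb sw w0])
    fix j j' :: nat assume jj: "1 \<le> j" "j < j'"
    define d where "d = j' - j"
    have e: "j' + j = d + 2 * j" unfolding d_def using jj by simp
    have "\<bar>r^(j' + j) * real (j' + j)\<bar> = y^(d + 2*j) * real (d + 2*j)"
      unfolding e y_def by (simp add: abs_mult power_abs)
    also have "\<dots> = real d * y^d * (y^2)^j + 2 * (real j * (y^2)^j) * y^d"
      unfolding power_mult[symmetric] by (simp add: power_add algebra_simps)
    also have "\<dots> \<le> real d * y^d * 1 + 2 * (1 / (1 - y^2)) * y^d"
      using y q by (intro add_mono mult_left_mono mult_right_mono n_pow_le power_le_one) auto
    also have "\<dots> = w d" unfolding w_def by simp
    finally show "\<bar>r^(j' + j) * real (j' + j)\<bar> \<le> w (j' - j)" unfolding d_def .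
  qed
  thus ?thesis unfolding b2d_def by (simp only: mult.assoc)
qed

lemma D1_sums: "(\<lambda>j'. if j' = 0 then 0 else b j'^2 * 1^j') sums betaf b 1"
  by (rule betaf_sums[OF sb]) simp

lemma Dq_sums: "(\<lambda>j'. if j' = 0 then 0 else b j'^2 * (r^2)^j') sums betaf b (r^2)"
  by (rule betaf_sums[OF sb]) (use r in \<open>simp add: abs_square_le_1\<close>)

lemma Dq1_sums: "(\<lambda>j'. if j' = 0 then 0 else b j'^2 * (real j' * (r^2)^j')) sums betaf1 b (r^2)"
  by (rule betaf1_sums[OF sb]) (use r in \<open>auto simp: abs_square_less_1\<close>)

end



lemma sum3: "(\<Sum>j\<in>A. f j + c * g j - e * h j) = sum f A + c * sum g A - e * sum h A"
  for f g h :: "nat \<Rightarrow> real"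
  by (simp add: sum.distrib sum_subtractf sum_distrib_left)

lemma sum5: "(\<Sum>j\<in>A. a * f j + c * g j + e * h j - k * u j - m * v j)
   = a * sum f A + c * sum g A + e * sum h A - k * sum u A - m * sum v A"
  for f g h u v :: "nat \<Rightarrow> real"
  by (simp add: sum.distrib sum_subtractf sum_distrib_left)

lemma t_alg: "bb * (A * X + Cc * dd * X + dd^2 / 2 * X - Bc * Y - s * Y / u)
   = A * (bb * X) + Cc * (bb * X * dd) + 1/2 * (bb * X * dd^2) - Bc * (bb * Y) - 1 / u * (bb * Y * s)"
  for bb A X Cc dd Bc Y s u :: real
  unfolding divide_inverse by algebra

lemma d_alg: "A - Bc * Y - real (2 * j) * Y / u = A - Bc * Y - 2 * (1 / u) * (real j * Y)"
  for A Bc Y u :: real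
  by simp

lemma ff_alg: "bb * (A - Bc * Y - 2 * E * (n * Y)) + 2 * Z
   = A * (bb * 1) - Bc * (bb * Y) - 2 * E * (bb * (n * Y)) + 2 * Z"
  for bb A Bc Y E n Z :: real
  by (simp add: algebra_simps)

lemma V_alg: "u \<noteq> 0 \<Longrightarrow> a / u^2 * B1 - bc / u^2 * Bq - 2 * (1/u) * B1q
      + 2 * (a / u^2 * P0 + 3 * (1 + q) / (2 * u) * P1 + 1/2 * P2 - bc / u^2 * Q0 - 1/u * Q1)
    = 1 / u^2 * (a * (B1 + 2 * P0) - bc * (Bq + 2 * Q0))
           + 1 / u * (3 * P1 * (1 + q) - 2 * (Q1 + B1q)) + P2"
  for u a bc q B1 Bq B1q P0 P1 P2 Q0 Q1 :: real
  by (simp add: field_simps power2_eq_square)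

context
  fixes b :: "nat \<Rightarrow> real" and r :: real
  assumes sb: "summable (\<lambda>j. b (Suc j)^2)" and r: "\<bar>r\<bar> < 1"
begin

private lemma yy0: "0 \<le> \<bar>r\<bar>" and yy1: "\<bar>r\<bar> < 1" using r by auto
private lemma q1: "1 - r^2 \<noteq> 0" using r by (metis abs_square_less_1 less_irrefl right_minus_eq)
private lemma rr: "r^(j+j) = (r^2)^j" by (simp add: power_mult[symmetric] mult_2)

lemma lim1: "kappa1 b r \<longlonglongrightarrow> betaf b 1 + 2 * b1 b r"
proof -
  have L: "kappa1 b r \<longlonglongrightarrow> (\<Sum>j'. (if j' = 0 then 0 else b j'^2 * r^(ad j' j')) + 2 * (\<Sum>j\<in>{1..<j'}. b j * b j' * r^(ad j j')))"
    unfolding kappa1_def[abs_def]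
    by (rule main_lim[OF sb, where K="\<lambda>p j j'. r^(ad j j')" and w="\<lambda>d. \<bar>r\<bar>^d"])
       (auto simp: ad_sym power_abs ad_def summable_pows[OF yy0 yy1] yy0 yy1)
  have F: "(\<lambda>j'. (if j' = 0 then 0 else b j'^2 * r^(ad j' j')) + 2 * (\<Sum>j\<in>{1..<j'}. b j * b j' * r^(ad j j')))
      = (\<lambda>j'. (if j' = 0 then 0 else b j'^2 * 1^j') + 2 * (\<Sum>j\<in>{1..<j'}. b j * b j' * r^(j' - j)))"
  proof (rule ext)
    fix j'
    have "(\<Sum>j\<in>{1..<j'}. b j * b j' * r^(ad j j')) = (\<Sum>j\<in>{1..<j'}. b j * b j' * r^(j' - j))"
      by (intro sum.cong refl) (simp add: ad_def)
    thus "(if j' = 0 then 0 else b j'^2 * r^(ad j' j')) + 2 * (\<Sum>j\<in>{1..<j'}. b j * b j' * r^(ad j j'))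
      = (if j' = 0 then 0 else b j'^2 * 1^j') + 2 * (\<Sum>j\<in>{1..<j'}. b j * b j' * r^(j' - j))"
      by (simp add: ad_def)
  qed
  have S: "(\<lambda>j'. (if j' = 0 then 0 else b j'^2 * 1^j') + 2 * (\<Sum>j\<in>{1..<j'}. b j * b j' * r^(j' - j)))
      sums (betaf b 1 + 2 * b1 b r)"
    by (intro sums_add sums_mult D1_sums[OF sb r] P0_sums[OF sb r])
  show ?thesis using L unfolding F sums_unique[OF S, symmetric] .
qed

lemma lim2: "kappa2 b r \<longlonglongrightarrow>
           betaf b 1 * (1 + r^2) / (1 - r^2) - betaf b (r^2) / (1 - r^2)
           + 2 * (b1d b r + b1 b r * (1 + r^2) / (1 - r^2) - b2 b r / (1 - r^2))"
proof -
  have ke: "kappa2 b r = (\<lambda>p. \<Sum>j=1..p. \<Sum>j'=1..p. b j * b j' * K2p r p j j')"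
    by (rule ext) (rule kappa2_eq)
  have sw: "summable (\<lambda>d. real d * \<bar>r\<bar>^d + cc \<bar>r\<bar> * \<bar>r\<bar>^d)"
    using summable_pows[OF yy0 yy1] by (intro summable_add summable_mult) auto
  have bnd: "\<bar>K2p r p j j'\<bar> \<le> real (j' - j) * \<bar>r\<bar>^(j' - j) + cc \<bar>r\<bar> * \<bar>r\<bar>^(j' - j)" if "1 \<le> j" "j \<le> j'" for p j j'
  proof -
    have "\<bar>K2p r p j j'\<bar> \<le> K2full \<bar>r\<bar> j j'" by (rule K2p_abs[OF r])
    also have "\<dots> \<le> \<bar>r\<bar>^(ad j j') * (real (ad j j') + cc \<bar>r\<bar>)" by (rule K2full_le[OF yy0 yy1])
    finally show ?thesis using that(2) by (simp add: ad_def algebra_simps)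
  qed
  have w0: "0 \<le> real d * \<bar>r\<bar>^d + cc \<bar>r\<bar> * \<bar>r\<bar>^d" for d
    using cc_nonneg[OF yy0 yy1] by simp
  have L: "kappa2 b r \<longlonglongrightarrow> (\<Sum>j'. (if j' = 0 then 0 else b j'^2 * K2full r j' j') + 2 * (\<Sum>j\<in>{1..<j'}. b j * b j' * K2full r j j'))"
    unfolding ke
    by (rule main_lim[OF sb _ _ _ sw w0]) (rule K2p_sym, rule K2p_lim[OF r], rule bnd)
  have F: "(\<lambda>j'. (if j' = 0 then 0 else b j'^2 * K2full r j' j') + 2 * (\<Sum>j\<in>{1..<j'}. b j * b j' * K2full r j j'))
     = (\<lambda>j'. cc r * (if j' = 0 then 0 else b j'^2 * 1^j') - 1 / (1 - r^2) * (if j' = 0 then 0 else b j'^2 * (r^2)^j')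
         + 2 * ((\<Sum>j\<in>{1..<j'}. b j * b j' * r^(j' - j) * real (j' - j))
              + cc r * (\<Sum>j\<in>{1..<j'}. b j * b j' * r^(j' - j))
              - 1 / (1 - r^2) * (\<Sum>j\<in>{1..<j'}. b j * b j' * r^(j' + j))))"
  proof (rule ext)
    fix j'
    have "(\<Sum>j\<in>{1..<j'}. b j * b j' * K2full r j j') =
       (\<Sum>j\<in>{1..<j'}. b j * b j' * r^(j' - j) * real (j' - j) + cc r * (b j * b j' * r^(j' - j))
            - 1 / (1 - r^2) * (b j * b j' * r^(j' + j)))"
      by (intro sum.cong refl) (auto simp: K2full_def ad_def algebra_simps add.commute)
    also have "\<dots> = (\<Sum>j\<in>{1..<j'}. b j * b j' * r^(j' - j) * real (j' - j))
              + cc r * (\<Sum>j\<in>{1..<j'}. b j * b j' * r^(j' - j))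
              - 1 / (1 - r^2) * (\<Sum>j\<in>{1..<j'}. b j * b j' * r^(j' + j))" by (rule sum3)
    finally have s: "(\<Sum>j\<in>{1..<j'}. b j * b j' * K2full r j j') = \<dots>" .
    have d: "K2full r j' j' = cc r - 1 / (1 - r^2) * (r^2)^j'"
      unfolding K2full_def by (simp add: ad_def rr)
    show "(if j' = 0 then 0 else b j'^2 * K2full r j' j') + 2 * (\<Sum>j\<in>{1..<j'}. b j * b j' * K2full r j j')
     = cc r * (if j' = 0 then 0 else b j'^2 * 1^j') - 1 / (1 - r^2) * (if j' = 0 then 0 else b j'^2 * (r^2)^j')
         + 2 * ((\<Sum>j\<in>{1..<j'}. b j * b j' * r^(j' - j) * real (j' - j))
              + cc r * (\<Sum>j\<in>{1..<j'}. b j * b j' * r^(j' - j))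
              - 1 / (1 - r^2) * (\<Sum>j\<in>{1..<j'}. b j * b j' * r^(j' + j)))"
      unfolding s d by (simp add: algebra_simps)
  qed
  have S: "(\<lambda>j'. cc r * (if j' = 0 then 0 else b j'^2 * 1^j') - 1 / (1 - r^2) * (if j' = 0 then 0 else b j'^2 * (r^2)^j')
         + 2 * ((\<Sum>j\<in>{1..<j'}. b j * b j' * r^(j' - j) * real (j' - j))
              + cc r * (\<Sum>j\<in>{1..<j'}. b j * b j' * r^(j' - j))
              - 1 / (1 - r^2) * (\<Sum>j\<in>{1..<j'}. b j * b j' * r^(j' + j))))
     sums (cc r * betaf b 1 - 1 / (1 - r^2) * betaf b (r^2) + 2 * (b1d b r + cc r * b1 b r - 1 / (1 - r^2) * b2 b r))"
    by (intro sums_add sums_diff sums_mult D1_sums[OF sb r] Dq_sums[OF sb r] P0_sums[OF sb r] P1_sums[OF sb r] Q0_sums[OF sb r])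
  have V: "cc r * betaf b 1 - 1 / (1 - r^2) * betaf b (r^2) + 2 * (b1d b r + cc r * b1 b r - 1 / (1 - r^2) * b2 b r)
     = betaf b 1 * (1 + r^2) / (1 - r^2) - betaf b (r^2) / (1 - r^2)
           + 2 * (b1d b r + b1 b r * (1 + r^2) / (1 - r^2) - b2 b r / (1 - r^2))"
    unfolding cc_def by (simp add: field_simps)
  show ?thesis using L unfolding F sums_unique[OF S, symmetric] V .
qed


lemma lim3: "kappa3 b r \<longlonglongrightarrow>
           1 / (1 - r^2)^2 * ((1 + 4 * r^2 + r^4) * (betaf b 1 + 2 * b1 b r)
                              - (1 + 3 * r^2) * (betaf b (r^2) + 2 * b2 b r))
           + 1 / (1 - r^2) * (3 * b1d b r * (1 + r^2) - 2 * (b2d b r + betaf1 b (r^2)))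
           + bdd2 b r"
proof -
  define A where "A = (1 + 4*r^2 + r^4) / (1 - r^2)^2"
  define Bc where "Bc = (1 + 3*r^2) / (1 - r^2)^2"
  define Cc where "Cc = 3 * (1 + r^2) / (2 * (1 - r^2))"
  define E where "E = 1 / (1 - r^2)"
  have ke: "kappa3 b r = (\<lambda>p. \<Sum>j=1..p. \<Sum>j'=1..p. b j * b j' * K3p r p j j')"
    by (rule ext) (rule kappa3_eq)
  have lim: "(\<lambda>p. K3p r p j j') \<longlonglongrightarrow> K3full r j (j' - j)" if "1 \<le> j" "j \<le> j'" for j j'
    using K3p_lim[OF r, of j "j' - j"] that by simp
  have bnd: "\<bar>K3p r p j j'\<bar> \<le> w3 \<bar>r\<bar> (j' - j)" if "1 \<le> j" "j \<le> j'" for p j j'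
    using order_trans[OF K3p_abs[OF r, of p j "j' - j"] K3full_le[OF yy0 yy1]] that by simp
  have L: "kappa3 b r \<longlonglongrightarrow> (\<Sum>j'. (if j' = 0 then 0 else b j'^2 * K3full r j' (j' - j'))
                 + 2 * (\<Sum>j\<in>{1..<j'}. b j * b j' * K3full r j (j' - j)))"
    unfolding ke
    by (rule main_lim[OF sb _ _ _ w3_summable[OF yy0 yy1] w3_nonneg[OF yy0 yy1]])
       (rule K3p_sym, rule lim, assumption+, rule bnd)
  define FF where "FF = (\<lambda>j'. A * (if j' = 0 then 0 else b j'^2 * 1^j') - Bc * (if j' = 0 then 0 else b j'^2 * (r^2)^j')
         - 2 * E * (if j' = 0 then 0 else b j'^2 * (real j' * (r^2)^j'))
         + 2 * (A * (\<Sum>j\<in>{1..<j'}. b j * b j' * r^(j' - j))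
              + Cc * (\<Sum>j\<in>{1..<j'}. b j * b j' * r^(j' - j) * real (j' - j))
              + 1/2 * (\<Sum>j\<in>{1..<j'}. b j * b j' * r^(j' - j) * real (j' - j)^2)
              - Bc * (\<Sum>j\<in>{1..<j'}. b j * b j' * r^(j' + j))
              - E * (\<Sum>j\<in>{1..<j'}. b j * b j' * r^(j' + j) * real (j' + j))))"
  have F: "(\<lambda>j'. (if j' = 0 then 0 else b j'^2 * K3full r j' (j' - j'))
                 + 2 * (\<Sum>j\<in>{1..<j'}. b j * b j' * K3full r j (j' - j))) = FF"
  proof (rule ext)
    fix j'
    have t: "b j * b j' * K3full r j (j' - j) =
        A * (b j * b j' * r^(j' - j)) + Cc * (b j * b j' * r^(j' - j) * real (j' - j))
        + 1/2 * (b j * b j' * r^(j' - j) * real (j' - j)^2) - Bc * (b j * b j' * r^(j' + j))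
        - E * (b j * b j' * r^(j' + j) * real (j' + j))" if "j \<in> {1..<j'}" for j
    proof -
      have e: "2 * j + (j' - j) = j' + j" using that by auto
      show ?thesis unfolding K3full_def e A_def[symmetric] Bc_def[symmetric] Cc_def[symmetric] E_def
        by (rule t_alg)
    qed
    have s0: "(\<Sum>j\<in>{1..<j'}. b j * b j' * K3full r j (j' - j)) =
      (\<Sum>j\<in>{1..<j'}. A * (b j * b j' * r^(j' - j)) + Cc * (b j * b j' * r^(j' - j) * real (j' - j))
        + 1/2 * (b j * b j' * r^(j' - j) * real (j' - j)^2) - Bc * (b j * b j' * r^(j' + j))
        - E * (b j * b j' * r^(j' + j) * real (j' + j)))"
      by (rule sum.cong[OF refl t])
    have s: "(\<Sum>j\<in>{1..<j'}. b j * b j' * K3full r j (j' - j)) =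
        A * (\<Sum>j\<in>{1..<j'}. b j * b j' * r^(j' - j))
              + Cc * (\<Sum>j\<in>{1..<j'}. b j * b j' * r^(j' - j) * real (j' - j))
              + 1/2 * (\<Sum>j\<in>{1..<j'}. b j * b j' * r^(j' - j) * real (j' - j)^2)
              - Bc * (\<Sum>j\<in>{1..<j'}. b j * b j' * r^(j' + j))
              - E * (\<Sum>j\<in>{1..<j'}. b j * b j' * r^(j' + j) * real (j' + j))"
      unfolding s0 by (rule sum5)
    have d: "K3full r j' 0 = A - Bc * (r^2)^j' - 2 * E * (real j' * (r^2)^j')"
    proof -
      have "r^(2*j'+0) = (r^2)^j'" by (simp add: power_mult)
      thus ?thesis unfolding K3full_def A_def[symmetric] Bc_def[symmetric] Cc_def[symmetric] E_def
        by (simp add: d_alg)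
    qed
    show "(if j' = 0 then 0 else b j'^2 * K3full r j' (j' - j'))
                 + 2 * (\<Sum>j\<in>{1..<j'}. b j * b j' * K3full r j (j' - j)) = FF j'"
    proof (cases "j' = 0")
      case True thus ?thesis by (simp add: FF_def)
    next
      case False
      have jj: "j' - j' = 0" by simp
      show ?thesis unfolding FF_def s jj d using False by (simp only: if_False power_one) (rule ff_alg)
    qed
  qed
  have S: "FF sums (A * betaf b 1 - Bc * betaf b (r^2) - 2 * E * betaf1 b (r^2)
      + 2 * (A * b1 b r + Cc * b1d b r + 1/2 * bdd2 b r - Bc * b2 b r - E * b2d b r))"
    unfolding FF_def
    by (intro sums_add sums_diff sums_mult D1_sums[OF sb r] Dq_sums[OF sb r] Dq1_sums[OF sb r]
          P0_sums[OF sb r] P1_sums[OF sb r] P2_sums[OF sb r] Q0_sums[OF sb r] Q1_sums[OF sb r])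
  have V: "A * betaf b 1 - Bc * betaf b (r^2) - 2 * E * betaf1 b (r^2)
      + 2 * (A * b1 b r + Cc * b1d b r + 1/2 * bdd2 b r - Bc * b2 b r - E * b2d b r)
    = 1 / (1 - r^2)^2 * ((1 + 4 * r^2 + r^4) * (betaf b 1 + 2 * b1 b r)
                              - (1 + 3 * r^2) * (betaf b (r^2) + 2 * b2 b r))
           + 1 / (1 - r^2) * (3 * b1d b r * (1 + r^2) - 2 * (b2d b r + betaf1 b (r^2)))
           + bdd2 b r"
    unfolding A_def Bc_def Cc_def E_def by (rule V_alg[OF q1])
  show ?thesis using L unfolding F sums_unique[OF S, symmetric] V .
qed

end


theorem mainTheorem8:
  fixes b :: "nat \<Rightarrow> real" and r :: real
  assumes "summable (\<lambda>j. b (Suc j)^2)" and "\<bar>r\<bar> < 1"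
  shows "(kappa1 b r \<longlongrightarrow> betaf b 1 + 2 * b1 b r) sequentially \<and>
         (kappa2 b r \<longlongrightarrow>
           betaf b 1 * (1 + r^2) / (1 - r^2) - betaf b (r^2) / (1 - r^2)
           + 2 * (b1d b r + b1 b r * (1 + r^2) / (1 - r^2) - b2 b r / (1 - r^2))) sequentially \<and>
         (kappa3 b r \<longlongrightarrow>
           1 / (1 - r^2)^2 * ((1 + 4 * r^2 + r^4) * (betaf b 1 + 2 * b1 b r)
                              - (1 + 3 * r^2) * (betaf b (r^2) + 2 * b2 b r))
           + 1 / (1 - r^2) * (3 * b1d b r * (1 + r^2) - 2 * (b2d b r + betaf1 b (r^2)))
           + bdd2 b r) sequentially"
  using lim1[OF assms] lim2[OF assms] lim3[OF assms] by blast

end
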